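(* Let $S$ be a simple extension of an infinite field $k$ of characteristic different from $2$, and let $c\in S^*$. Then the set $V_c=\{b\in S^*\mid cb^2\text{ is a primitive element of }S/k\}$ is non-empty and open in $S^*$.
   Context: A $k$-algebra $S$ is a simple extension of degree $n$ of the field $k$ if there is $c\in S^*$ (a primitive element) such that $1,c,\dots,c^{n-1}$ is a $k$-basis of $S$. $S$ is identified with $\mathbb{A}^n(k)$ via a $k$-basis and given the Zariski topology; $S^*$ carries the subspace topology. *)

theory Defs
  imports Main
begin

text \<open>A k-algebra structure on a (unital, possibly noncommutative) ring S is a ring
homomorphism from k into the centre of S.\<close>
definition k_algebra :: "('k::field \<Rightarrow> 's::ring_1) \<Rightarrow> bool" where
  "k_algebra \<phi> \<longleftrightarrow> \<phi> 1 = 1 \<and> (\<forall>a b. \<phi> (a + b) = \<phi> a + \<phi> b)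
     \<and> (\<forall>a b. \<phi> (a * b) = \<phi> a * \<phi> b) \<and> (\<forall>a s. \<phi> a * s = s * \<phi> a)"

text \<open>Units S^* of S.\<close>
definition units_of_ring :: "'s::ring_1 set" where
  "units_of_ring = {s. \<exists>t. s * t = 1 \<and> t * s = 1}"

text \<open>e 0, ..., e (n-1) is a k-basis of S (scalar multiplication a.s = \<phi> a * s).\<close>
definition is_k_basis :: "('k::field \<Rightarrow> 's::ring_1) \<Rightarrow> nat \<Rightarrow> (nat \<Rightarrow> 's) \<Rightarrow> bool" where
  "is_k_basis \<phi> n e \<longleftrightarrow>
     (\<forall>s. \<exists>!a::nat \<Rightarrow> 'k. (\<forall>i\<ge>n. a i = 0) \<and> s = (\<Sum>i<n. \<phi> (a i) * e i))"

text \<open>Coordinates of s with respect to the basis e (a vector in k^n, zero beyond n).\<close>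
definition coords :: "('k::field \<Rightarrow> 's::ring_1) \<Rightarrow> nat \<Rightarrow> (nat \<Rightarrow> 's) \<Rightarrow> 's \<Rightarrow> (nat \<Rightarrow> 'k)" where
  "coords \<phi> n e s = (THE a. (\<forall>i\<ge>n. a i = 0) \<and> s = (\<Sum>i<n. \<phi> (a i) * e i))"

text \<open>c is a primitive element of S/k of degree n: c is a unit and 1, c, ..., c^(n-1)
  is a k-basis of S.\<close>
definition primitive_element :: "('k::field \<Rightarrow> 's::ring_1) \<Rightarrow> nat \<Rightarrow> 's \<Rightarrow> bool" where
  "primitive_element \<phi> n c \<longleftrightarrow> c \<in> units_of_ring \<and> is_k_basis \<phi> n (\<lambda>i. c ^ i)"

text \<open>S is a simple extension of degree n of k.\<close>
definition simple_extension :: "('k::field \<Rightarrow> 's::ring_1) \<Rightarrow> nat \<Rightarrow> bool" where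
  "simple_extension \<phi> n \<longleftrightarrow> k_algebra \<phi> \<and> (\<exists>c. primitive_element \<phi> n c)"

text \<open>Polynomial functions k^n \<rightarrow> k (in the variables x_0, ..., x_(n-1)).\<close>
inductive_set poly_funs :: "nat \<Rightarrow> ((nat \<Rightarrow> 'k::comm_ring_1) \<Rightarrow> 'k) set" for n :: nat where
  const: "(\<lambda>x. a) \<in> poly_funs n"
| var: "i < n \<Longrightarrow> (\<lambda>x. x i) \<in> poly_funs n"
| add: "p \<in> poly_funs n \<Longrightarrow> q \<in> poly_funs n \<Longrightarrow> (\<lambda>x. p x + q x) \<in> poly_funs n"
| mult: "p \<in> poly_funs n \<Longrightarrow> q \<in> poly_funs n \<Longrightarrow> (\<lambda>x. p x * q x) \<in> poly_funs n"

text \<open>Zariski-closed subsets of S, S being identified with k^n via the basis e.\<close>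
definition zariski_closed :: "('k::field \<Rightarrow> 's::ring_1) \<Rightarrow> nat \<Rightarrow> (nat \<Rightarrow> 's) \<Rightarrow> 's set \<Rightarrow> bool" where
  "zariski_closed \<phi> n e Z \<longleftrightarrow>
     (\<exists>P \<subseteq> poly_funs n. Z = {s. \<forall>p\<in>P. p (coords \<phi> n e s) = 0})"

definition zariski_open :: "('k::field \<Rightarrow> 's::ring_1) \<Rightarrow> nat \<Rightarrow> (nat \<Rightarrow> 's) \<Rightarrow> 's set \<Rightarrow> bool" where
  "zariski_open \<phi> n e U \<longleftrightarrow> zariski_closed \<phi> n e (- U)"

text \<open>Open in S^* for the subspace topology.\<close>
definition zariski_open_in_units :: "('k::field \<Rightarrow> 's::ring_1) \<Rightarrow> nat \<Rightarrow> (nat \<Rightarrow> 's) \<Rightarrow> 's set \<Rightarrow> bool" where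
  "zariski_open_in_units \<phi> n e V \<longleftrightarrow>
     (\<exists>U. zariski_open \<phi> n e U \<and> V = U \<inter> units_of_ring)"

end

theory Submission
  imports Defs "Jordan_Normal_Form.Determinant"
begin

lemma pf_sum:
  assumes "finite A" "\<And>a. a \<in> A \<Longrightarrow> f a \<in> poly_funs n"
  shows "(\<lambda>x. \<Sum>a\<in>A. f a x) \<in> poly_funs n"
  using assms
proof (induction A rule: finite_induct)
  case empty
  then show ?case using poly_funs.const[of 0 n] by simp
next
  case (insert a A)
  then show ?case using poly_funs.add[of "f a" n "\<lambda>x. \<Sum>a\<in>A. f a x"] by simp
qed

lemma pf_prod:
  assumes "finite A" "\<And>a. a \<in> A \<Longrightarrow> f a \<in> poly_funs n"
  shows "(\<lambda>x. \<Prod>a\<in>A. f a x) \<in> poly_funs n"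
  using assms
proof (induction A rule: finite_induct)
  case empty
  then show ?case using poly_funs.const[of 1 n] by simp
next
  case (insert a A)
  then show ?case using poly_funs.mult[of "f a" n "\<lambda>x. \<Prod>a\<in>A. f a x"] by simp
qed

definition is_pf :: "('k::field \<Rightarrow> 'k) \<Rightarrow> bool" where
  "is_pf f \<longleftrightarrow> (\<exists>q. \<forall>t. f t = poly q t)"

lemma is_pf_const: "is_pf (\<lambda>t. a)"
  unfolding is_pf_def by (rule exI[of _ "[:a:]"]) simp

lemma is_pf_id: "is_pf (\<lambda>t. t)"
  unfolding is_pf_def by (rule exI[of _ "[:0,1:]"]) simp

lemma is_pf_add: "is_pf f \<Longrightarrow> is_pf g \<Longrightarrow> is_pf (\<lambda>t. f t + g t)"
  unfolding is_pf_def by (metis poly_add)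

lemma is_pf_mult: "is_pf f \<Longrightarrow> is_pf g \<Longrightarrow> is_pf (\<lambda>t. f t * g t)"
  unfolding is_pf_def by (metis poly_mult)

lemma is_pf_power: "is_pf f \<Longrightarrow> is_pf (\<lambda>t. f t ^ m)"
  by (induction m) (auto intro: is_pf_mult is_pf_const)

lemma is_pf_sum:
  assumes "finite A" "\<And>a. a \<in> A \<Longrightarrow> is_pf (f a)"
  shows "is_pf (\<lambda>t. \<Sum>a\<in>A. f a t)"
  using assms
proof (induction A rule: finite_induct)
  case empty
  then show ?case using is_pf_const[of 0] by simp
next
  case (insert a A)
  then show ?case using is_pf_add[of "f a" "\<lambda>t. \<Sum>a\<in>A. f a t"] by simp
qed

lemma pf_line:
  assumes "p \<in> poly_funs n"
  shows "is_pf (\<lambda>t. p (\<lambda>k. a k + t * b k))"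
  using assms
proof (induction rule: poly_funs.induct)
  case (const c)
  then show ?case by (rule is_pf_const)
next
  case (var i)
  show ?case unfolding is_pf_def by (rule exI[of _ "[:a i, b i:]"]) (simp add: algebra_simps)
next
  case (add p q)
  show ?case by (rule is_pf_add[OF add.IH])
next
  case (mult p q)
  show ?case by (rule is_pf_mult[OF mult.IH])
qed

lemma is_pf_zero:
  assumes inf: "infinite (UNIV :: 'k::field set)" and f: "is_pf (f :: 'k \<Rightarrow> 'k)"
    and z: "\<And>t. t \<noteq> 0 \<Longrightarrow> f t = 0"
  shows "f 0 = 0"
proof -
  obtain q where q: "\<And>t. f t = poly q t" using f unfolding is_pf_def by blast
  have "q = 0"
  proof (rule ccontr)
    assume "q \<noteq> 0"
    then have "finite {x. poly q x = 0}" by (rule poly_roots_finite)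
    moreover have "UNIV - {0} \<subseteq> {x. poly q x = 0}" using z q by auto
    ultimately have "finite (UNIV - {0::'k})" by (rule finite_subset[rotated])
    then show False using inf by simp
  qed
  then show ?thesis using q by simp
qed

lemma poly_sum_le:
  fixes P :: "'k::field poly"
  assumes "degree P \<le> d"
  shows "poly P t = (\<Sum>i\<le>d. coeff P i * t ^ i)"
proof -
  have "poly P t = poly (\<Sum>i\<le>d. monom (coeff P i) i) t"
    using poly_as_sum_of_monoms'[OF assms] by simp
  also have "\<dots> = (\<Sum>i\<le>d. coeff P i * t ^ i)"
    by (simp add: poly_sum Polynomial.poly_monom)
  finally show ?thesis .
qed

lemma cauchy_fin:
  fixes f g :: "nat \<Rightarrow> 'k::field"
  assumes f: "\<And>i. d < i \<Longrightarrow> f i = 0" and g: "\<And>i. d' < i \<Longrightarrow> g i = 0"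
  shows "(\<Sum>i\<le>d. f i * t ^ i) * (\<Sum>i\<le>d'. g i * t ^ i)
       = (\<Sum>m\<le>d+d'. (\<Sum>i\<le>m. f i * g (m - i)) * t ^ m)"
proof -
  define P where "P = Abs_poly f"
  define Q where "Q = Abs_poly g"
  have cP: "coeff P = f" unfolding P_def by (rule coeff_Abs_poly) (use f in auto)
  have cQ: "coeff Q = g" unfolding Q_def by (rule coeff_Abs_poly) (use g in auto)
  have dP: "degree P \<le> d" by (rule degree_le) (use f cP in auto)
  have dQ: "degree Q \<le> d'" by (rule degree_le) (use g cQ in auto)
  have dPQ: "degree (P * Q) \<le> d + d'"
    using degree_mult_le[of P Q] dP dQ by linarith
  have "(\<Sum>i\<le>d. f i * t ^ i) * (\<Sum>i\<le>d'. g i * t ^ i) = poly P t * poly Q t"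
    using poly_sum_le[OF dP, of t] poly_sum_le[OF dQ, of t] cP cQ by simp
  also have "\<dots> = poly (P * Q) t" by simp
  also have "\<dots> = (\<Sum>m\<le>d+d'. coeff (P * Q) m * t ^ m)" by (rule poly_sum_le[OF dPQ])
  also have "\<dots> = (\<Sum>m\<le>d+d'. (\<Sum>i\<le>m. f i * g (m - i)) * t ^ m)"
    by (simp add: coeff_mult cP cQ)
  finally show ?thesis .
qed

lemma rep:
  fixes p :: "(nat \<Rightarrow> 'k::field) \<Rightarrow> 'k"
  assumes "p \<in> poly_funs n"
  shows "\<exists>h d. (\<forall>i. h i \<in> poly_funs n) \<and> (\<forall>i v. d < i \<longrightarrow> h i v = 0)
     \<and> (\<forall>t v. p (\<lambda>k. x0 k + t * v k) = (\<Sum>i\<le>d. h i v * t ^ i))"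
  using assms
proof (induction rule: poly_funs.induct)
  case (const a)
  show ?case
    by (rule exI[of _ "\<lambda>i v. if i = 0 then a else 0"], rule exI[of _ 0])
       (auto intro: poly_funs.const)
next
  case (var i)
  show ?case
  proof (rule exI[of _ "\<lambda>j v. if j = 0 then x0 i else if j = 1 then v i else 0"],
      rule exI[of _ 1], intro conjI allI impI)
    fix j show "(\<lambda>v. if j = 0 then x0 i else if j = 1 then v i else 0) \<in> poly_funs n"
      using var by (cases "j = 0"; cases "j = 1") (auto intro: poly_funs.const poly_funs.var)
  next
    fix t and v :: "nat \<Rightarrow> 'k"
    show "x0 i + t * v i = (\<Sum>j\<le>1. (if j = 0 then x0 i else if j = 1 then v i else 0) * t ^ j)"
      by (simp add: algebra_simps)
  qed auto
next
  case (add p q)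
  then obtain h d h' d' where
    h: "\<forall>i. h i \<in> poly_funs n" "\<forall>i v. d < i \<longrightarrow> h i v = 0"
       "\<forall>t v. p (\<lambda>k. x0 k + t * v k) = (\<Sum>i\<le>d. h i v * t ^ i)" and
    h': "\<forall>i. h' i \<in> poly_funs n" "\<forall>i v. d' < i \<longrightarrow> h' i v = 0"
       "\<forall>t v. q (\<lambda>k. x0 k + t * v k) = (\<Sum>i\<le>d'. h' i v * t ^ i)" by blast
  define D where "D = max d d'"
  have e1: "(\<Sum>i\<le>d. h i v * t ^ i) = (\<Sum>i\<le>D. h i v * t ^ i)" for t v
    by (rule sum.mono_neutral_left) (use h(2) in \<open>auto simp: D_def\<close>)
  have e2: "(\<Sum>i\<le>d'. h' i v * t ^ i) = (\<Sum>i\<le>D. h' i v * t ^ i)" for t v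
    by (rule sum.mono_neutral_left) (use h'(2) in \<open>auto simp: D_def\<close>)
  show ?case
  proof (rule exI[of _ "\<lambda>i v. h i v + h' i v"], rule exI[of _ D], intro conjI allI impI)
    fix i show "(\<lambda>v. h i v + h' i v) \<in> poly_funs n" using h(1) h'(1) by (auto intro: poly_funs.add)
  next
    fix i v assume "D < i" then show "h i v + h' i v = 0" using h(2) h'(2) by (auto simp: D_def)
  next
    fix t v
    show "p (\<lambda>k. x0 k + t * v k) + q (\<lambda>k. x0 k + t * v k) = (\<Sum>i\<le>D. (h i v + h' i v) * t ^ i)"
      using h(3) h'(3) e1 e2 by (simp add: algebra_simps sum.distrib)
  qed
next
  case (mult p q)
  then obtain h d h' d' where
    h: "\<forall>i. h i \<in> poly_funs n" "\<forall>i v. d < i \<longrightarrow> h i v = 0"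
       "\<forall>t v. p (\<lambda>k. x0 k + t * v k) = (\<Sum>i\<le>d. h i v * t ^ i)" and
    h': "\<forall>i. h' i \<in> poly_funs n" "\<forall>i v. d' < i \<longrightarrow> h' i v = 0"
       "\<forall>t v. q (\<lambda>k. x0 k + t * v k) = (\<Sum>i\<le>d'. h' i v * t ^ i)" by blast
  show ?case
  proof (rule exI[of _ "\<lambda>m v. \<Sum>i\<le>m. h i v * h' (m - i) v"], rule exI[of _ "d + d'"],
      intro conjI allI impI)
    fix m show "(\<lambda>v. \<Sum>i\<le>m. h i v * h' (m - i) v) \<in> poly_funs n"
      by (rule pf_sum) (use h(1) h'(1) in \<open>auto intro: poly_funs.mult\<close>)
  next
    fix m v assume m: "d + d' < m"
    show "(\<Sum>i\<le>m. h i v * h' (m - i) v) = 0"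
    proof (rule sum.neutral, rule ballI)
      fix i assume "i \<in> {..m}"
      show "h i v * h' (m - i) v = 0"
      proof (cases "d < i")
        case True then show ?thesis using h(2) by simp
      next
        case False then have "d' < m - i" using m by linarith
        then show ?thesis using h'(2) by simp
      qed
    qed
  next
    fix t v
    show "p (\<lambda>k. x0 k + t * v k) * q (\<lambda>k. x0 k + t * v k) =
        (\<Sum>m\<le>d + d'. (\<Sum>i\<le>m. h i v * h' (m - i) v) * t ^ m)"
      using h(3) h'(3) cauchy_fin[of d "\<lambda>i. h i v" d' "\<lambda>i. h' i v" t] h(2) h'(2) by simp
  qed
qed

lemma hasse:
  fixes p :: "(nat \<Rightarrow> 'k::field) \<Rightarrow> 'k"
  assumes inf: "infinite (UNIV :: 'k set)" and p: "p \<in> poly_funs n" and p0: "p x0 = 0"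
    and dir: "\<And>u. u \<in> Dir \<Longrightarrow> \<exists>u'. (\<forall>t. (\<lambda>i. u i + t * u' i) \<in> Dir)
                 \<and> (\<forall>t. p (\<lambda>i. x0 i + t * (u i + t * u' i)) = 0)"
    and v: "v \<in> Dir"
  shows "p (\<lambda>i. x0 i + v i) = 0"
proof -
  obtain h d where h: "\<forall>i. h i \<in> poly_funs n" "\<forall>i v. d < i \<longrightarrow> h i v = 0"
       "\<forall>t v. p (\<lambda>k. x0 k + t * v k) = (\<Sum>i\<le>d. h i v * t ^ i)"
    using rep[OF p, of x0] by blast
  have h0: "h 0 v = 0" for v
  proof -
    have "p (\<lambda>k. x0 k + 0 * v k) = (\<Sum>i\<le>d. h i v * 0 ^ i)" using h(3) by blast
    also have "\<dots> = (\<Sum>i\<in>{0}. h i v * 0 ^ i)"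
      by (rule sum.mono_neutral_right) auto
    finally show ?thesis using p0 by simp
  qed
  have main: "\<forall>v\<in>Dir. 0 < j \<longrightarrow> h j v = 0" for j
  proof (induction j rule: less_induct)
    case (less j)
    show ?case
    proof (intro ballI impI)
      fix u assume u: "u \<in> Dir" and j: "0 < j"
      show "h j u = 0"
      proof (cases "d < j")
        case True then show ?thesis using h(2) by simp
      next
        case False
        then have jd: "j \<le> d" by simp
        obtain u' where u': "\<forall>t. (\<lambda>i. u i + t * u' i) \<in> Dir"
          "\<forall>t. p (\<lambda>i. x0 i + t * (u i + t * u' i)) = 0" using dir[OF u] by blast
        define w where "w t = (\<lambda>i. u i + t * u' i)" for t
        have low: "h i (w t) = 0" if "i < j" for i t
        proof (cases "i = 0")
          case True then show ?thesis using h0 by simp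
        next
          case False then show ?thesis using less[OF that] u'(1) w_def by auto
        qed
        define G where "G t = (\<Sum>i\<in>{j..d}. h i (w t) * t ^ (i - j))" for t
        have Gt: "G t = 0" if "t \<noteq> 0" for t
        proof -
          have "0 = (\<Sum>i\<le>d. h i (w t) * t ^ i)" using u'(2) h(3) unfolding w_def by metis
          also have "\<dots> = (\<Sum>i\<in>{j..d}. h i (w t) * t ^ i)"
            by (rule sum.mono_neutral_right) (auto simp: low)
          also have "\<dots> = (\<Sum>i\<in>{j..d}. t ^ j * (h i (w t) * t ^ (i - j)))"
            by (rule sum.cong) (auto simp: power_add[symmetric])
          also have "\<dots> = t ^ j * G t" by (simp add: G_def sum_distrib_left)
          finally show ?thesis using that by simp
        qed
        have "is_pf G" unfolding G_def w_def
          by (rule is_pf_sum, simp, rule is_pf_mult, rule pf_line, use h(1) in blast,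
              rule is_pf_power, rule is_pf_id)
        then have "G 0 = 0" using is_pf_zero[OF inf] Gt by blast
        moreover have "G 0 = (\<Sum>i\<in>{j}. h i (w 0) * 0 ^ (i - j))"
          unfolding G_def by (rule sum.mono_neutral_right) (use jd in auto)
        moreover have "w 0 = u" unfolding w_def by simp
        ultimately show ?thesis by simp
      qed
    qed
  qed
  have "p (\<lambda>k. x0 k + 1 * v k) = (\<Sum>i\<le>d. h i v * 1 ^ i)" using h(3) by blast
  also have "\<dots> = (\<Sum>i\<in>{0}. h i v * 1 ^ i)"
    by (rule sum.mono_neutral_right) (use main v in auto)
  finally show ?thesis using h0 by simp
qed


locale ext_setup =
  fixes \<phi> :: "'k::field \<Rightarrow> 's::ring_1" and n :: nat and e :: "nat \<Rightarrow> 's"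
  assumes alg: "k_algebra \<phi>" and eb: "is_k_basis \<phi> n e" and se: "simple_extension \<phi> n"
begin

lemma phi_one[simp]: "\<phi> 1 = 1" using alg unfolding k_algebra_def by blast
lemma phi_add[simp]: "\<phi> (a + b) = \<phi> a + \<phi> b" using alg unfolding k_algebra_def by blast
lemma phi_mult: "\<phi> (a * b) = \<phi> a * \<phi> b" using alg unfolding k_algebra_def by blast
lemma phi_central: "\<phi> a * s = s * \<phi> a" using alg unfolding k_algebra_def by blast
lemma phi_zero[simp]: "\<phi> 0 = 0"
proof -
  have "\<phi> 0 = \<phi> 0 + \<phi> 0" using phi_add[of 0 0] by simp
  then show ?thesis by simp
qed
lemma phi_sum: "\<phi> (\<Sum>a\<in>A. f a) = (\<Sum>a\<in>A. \<phi> (f a))"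
  by (induction A rule: infinite_finite_induct) auto

lemma phi_left: "s * \<phi> a = \<phi> a * s" by (simp add: phi_central)
lemma phi_left2: "s * (\<phi> a * r) = \<phi> a * (s * r)"
  by (metis mult.assoc phi_central)

abbreviation co where "co \<equiv> coords \<phi> n e"

definition emb :: "(nat \<Rightarrow> 'k) \<Rightarrow> 's" where
  "emb \<beta> = (\<Sum>i<n. \<phi> (\<beta> i) * e i)"

lemma coords_prop: "(\<forall>i\<ge>n. co s i = 0) \<and> s = (\<Sum>i<n. \<phi> (co s i) * e i)"
proof -
  have "\<exists>!a. (\<forall>i\<ge>n. a i = 0) \<and> s = (\<Sum>i<n. \<phi> (a i) * e i)" using eb unfolding is_k_basis_def by blast
  then show ?thesis unfolding coords_def by (rule theI')
qed

lemma coords_zero_beyond: "n \<le> i \<Longrightarrow> co s i = 0" using coords_prop by blast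
lemma emb_coords[simp]: "emb (co s) = s" using coords_prop unfolding emb_def by metis

lemma coords_unique:
  assumes "\<forall>i\<ge>n. a i = 0" "s = (\<Sum>i<n. \<phi> (a i) * e i)"
  shows "co s = a"
proof -
  have ex1: "\<exists>!a. (\<forall>i\<ge>n. a i = 0) \<and> s = (\<Sum>i<n. \<phi> (a i) * e i)" using eb unfolding is_k_basis_def by blast
  show ?thesis unfolding coords_def by (rule the1_equality[OF ex1]) (use assms in simp)
qed

lemma coords_add: "co (x + y) = (\<lambda>i. co x i + co y i)"
proof (rule coords_unique)
  show "\<forall>i\<ge>n. co x i + co y i = 0" using coords_zero_beyond by simp
  have "x + y = (\<Sum>i<n. \<phi> (co x i) * e i) + (\<Sum>i<n. \<phi> (co y i) * e i)"
    using coords_prop by metis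
  then show "x + y = (\<Sum>i<n. \<phi> (co x i + co y i) * e i)"
    by (simp add: distrib_right sum.distrib)
qed

lemma coords_smul: "co (\<phi> t * x) = (\<lambda>i. t * co x i)"
proof (rule coords_unique)
  show "\<forall>i\<ge>n. t * co x i = 0" using coords_zero_beyond by simp
  have "\<phi> t * x = \<phi> t * (\<Sum>i<n. \<phi> (co x i) * e i)"
    using coords_prop by metis
  then show "\<phi> t * x = (\<Sum>i<n. \<phi> (t * co x i) * e i)"
    by (simp add: sum_distrib_left phi_mult mult.assoc)
qed

lemma coords_zero: "co 0 = (\<lambda>i. 0)"
  by (rule coords_unique) auto

lemma coords_sum: "co (\<Sum>a\<in>A. f a) = (\<lambda>i. \<Sum>a\<in>A. co (f a) i)"
proof (induction A rule: infinite_finite_induct)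
  case (infinite A)
  then show ?case by (simp add: coords_zero)
next
  case empty
  then show ?case by (simp add: coords_zero)
next
  case (insert x F)
  then show ?case by (simp add: coords_add)
qed

lemma coords_emb: "co (emb \<beta>) = (\<lambda>i. if i < n then \<beta> i else 0)"
  by (rule coords_unique) (auto simp: emb_def)

lemma coords_diff: "co (x - y) = (\<lambda>i. co x i - co y i)"
proof -
  have "co x = co ((x - y) + y)" by simp
  then have "co x = (\<lambda>i. co (x - y) i + co y i)" by (simp only: coords_add)
  then show ?thesis by (auto simp: fun_eq_iff)
qed

lemma coords_inj: "co x = co y \<Longrightarrow> x = y" by (metis emb_coords)

lemma comm: "x * y = y * (x :: 's)"
proof -
  obtain c0 where c0: "is_k_basis \<phi> n (\<lambda>i. c0 ^ i)"
    using se unfolding simple_extension_def primitive_element_def by blast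
  have exp: "\<exists>a. z = (\<Sum>i<n. \<phi> (a i) * c0 ^ i)" for z
    using c0 unfolding is_k_basis_def by blast
  have c0y: "c0 * z = z * c0" for z
  proof -
    obtain a where a: "z = (\<Sum>i<n. \<phi> (a i) * c0 ^ i)" using exp by blast
    have "c0 * z = (\<Sum>i<n. c0 * (\<phi> (a i) * c0 ^ i))" by (simp add: a sum_distrib_left)
    also have "\<dots> = (\<Sum>i<n. (\<phi> (a i) * c0 ^ i) * c0)"
      by (rule sum.cong) (simp, metis mult.assoc phi_central power_commutes)
    also have "\<dots> = z * c0" by (simp add: a sum_distrib_right)
    finally show ?thesis .
  qed
  have cpy: "c0 ^ m * z = z * c0 ^ m" for m z
  proof (induction m)
    case 0 then show ?case by simp
  next
    case (Suc m)
    have "c0 ^ Suc m * z = c0 * (c0 ^ m * z)" by (simp add: mult.assoc)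
    also have "\<dots> = c0 * (z * c0 ^ m)" using Suc by simp
    also have "\<dots> = z * c0 ^ Suc m" by (metis c0y mult.assoc power_Suc)
    finally show ?case .
  qed
  obtain a where a: "x = (\<Sum>i<n. \<phi> (a i) * c0 ^ i)" using exp by blast
  have "x * y = (\<Sum>i<n. \<phi> (a i) * c0 ^ i * y)" by (simp add: a sum_distrib_right)
  also have "\<dots> = (\<Sum>i<n. y * (\<phi> (a i) * c0 ^ i))"
    by (rule sum.cong) (simp, metis mult.assoc phi_central cpy)
  also have "\<dots> = y * x" by (simp add: a sum_distrib_left)
  finally show ?thesis .
qed

lemma unit_iff: "(x::'s) \<in> units_of_ring \<longleftrightarrow> (\<exists>t. x * t = 1)"
proof
  assume "x \<in> units_of_ring" then show "\<exists>t. x * t = 1" unfolding units_of_ring_def by blast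
next
  assume "\<exists>t. x * t = 1"
  then obtain t where "x * t = 1" by blast
  moreover have "t * x = x * t" by (rule comm)
  ultimately have "x * t = 1 \<and> t * x = 1" by simp
  then show "x \<in> units_of_ring" unfolding units_of_ring_def by (intro CollectI exI[of _ t])
qed


lemma lin_comb_coords: "co (\<Sum>j<n. \<phi> (a j) * w j) = (\<lambda>i. \<Sum>j<n. a j * co (w j) i)"
  by (simp add: coords_sum coords_smul)

definition Mw :: "(nat \<Rightarrow> 's) \<Rightarrow> 'k mat" where
  "Mw w = mat n n (\<lambda>(i,j). co (w j) i)"

lemma Mw_carrier: "Mw w \<in> carrier_mat n n" unfolding Mw_def by simp

lemma Mw_vec: "i < n \<Longrightarrow> (Mw w *\<^sub>v vec n a) $ i = (\<Sum>j<n. a j * co (w j) i)"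
  unfolding Mw_def
  by (simp add: scalar_prod_def atLeast0LessThan mult.commute)

lemma sol_iff:
  assumes a: "\<forall>j\<ge>n. a j = 0"
  shows "(s = (\<Sum>j<n. \<phi> (a j) * w j)) \<longleftrightarrow> (Mw w *\<^sub>v vec n a = vec n (co s))"
proof
  assume s: "s = (\<Sum>j<n. \<phi> (a j) * w j)"
  show "Mw w *\<^sub>v vec n a = vec n (co s)"
  proof (rule eq_vecI)
    fix i assume "i < dim_vec (vec n (co s))"
    then have i: "i < n" by simp
    show "(Mw w *\<^sub>v vec n a) $ i = vec n (co s) $ i"
      using i by (simp add: Mw_vec s lin_comb_coords)
  qed (simp add: Mw_def)
next
  assume h: "Mw w *\<^sub>v vec n a = vec n (co s)"
  have "co s = co (\<Sum>j<n. \<phi> (a j) * w j)"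
  proof
    fix i
    show "co s i = co (\<Sum>j<n. \<phi> (a j) * w j) i"
    proof (cases "i < n")
      case True
      have "co s i = vec n (co s) $ i" using True by simp
      also have "\<dots> = (\<Sum>j<n. a j * co (w j) i)" using h Mw_vec[OF True] by metis
      finally show ?thesis by (simp add: lin_comb_coords)
    next
      case False
      then show ?thesis using coords_zero_beyond by simp
    qed
  qed
  then show "s = (\<Sum>j<n. \<phi> (a j) * w j)" by (rule coords_inj)
qed

lemma basis_det: "is_k_basis \<phi> n w \<longleftrightarrow> det (Mw w) \<noteq> 0"
proof
  assume b: "is_k_basis \<phi> n w"
  show "det (Mw w) \<noteq> 0"
  proof
    assume "det (Mw w) = 0"
    then obtain v where v: "v \<in> carrier_vec n" "v \<noteq> 0\<^sub>v n" "Mw w *\<^sub>v v = 0\<^sub>v n"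
      using det_0_iff_vec_prod_zero_field[OF Mw_carrier] by blast
    define a where "a j = (if j < n then v $ j else 0)" for j
    have va: "vec n a = v" using v(1) by (intro eq_vecI) (auto simp: a_def)
    have a0: "\<forall>j\<ge>n. a j = 0" by (simp add: a_def)
    have z0: "\<forall>j\<ge>n. (\<lambda>j. 0::'k) j = 0" by simp
    have vz: "vec n (co 0) = 0\<^sub>v n" by (intro eq_vecI) (auto simp: coords_zero)
    have P1: "0 = (\<Sum>j<n. \<phi> (a j) * w j)"
      using sol_iff[OF a0, of 0 w] va v(3) vz by simp
    have P2: "0 = (\<Sum>j<n. \<phi> ((\<lambda>j. 0::'k) j) * w j)" by simp
    have ex1: "\<exists>!a. (\<forall>i\<ge>n. a i = 0) \<and> (0::'s) = (\<Sum>i<n. \<phi> (a i) * w i)"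
      using b unfolding is_k_basis_def by blast
    have e1: "(THE a. (\<forall>i\<ge>n. a i = 0) \<and> (0::'s) = (\<Sum>i<n. \<phi> (a i) * w i)) = a"
      by (rule the1_equality[OF ex1]) (use a0 P1 in simp)
    have e2: "(THE a. (\<forall>i\<ge>n. a i = 0) \<and> (0::'s) = (\<Sum>i<n. \<phi> (a i) * w i)) = (\<lambda>j. 0)"
      by (rule the1_equality[OF ex1]) (use z0 P2 in simp)
    have "a = (\<lambda>j. 0)" using e1 e2 by simp
    then have "v = 0\<^sub>v n" using va by (simp add: zero_vec_def)
    then show False using v(2) by simp
  qed
next
  assume d: "det (Mw w) \<noteq> 0"
  have "Mw w \<in> Units (ring_mat TYPE('k) n ())"
    by (rule det_non_zero_imp_unit[OF Mw_carrier d])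
  then have "\<exists>B\<in>carrier_mat n n. B * Mw w = 1\<^sub>m n \<and> Mw w * B = 1\<^sub>m n"
    unfolding Units_def by (simp add: ring_mat_simps)
  then obtain B where B1: "B \<in> carrier_mat n n" and B23: "B * Mw w = 1\<^sub>m n \<and> Mw w * B = 1\<^sub>m n" ..
  note B = B1 conjunct1[OF B23] conjunct2[OF B23]
  show "is_k_basis \<phi> n w"
    unfolding is_k_basis_def
  proof
    fix s
    define av where "av = B *\<^sub>v vec n (co s)"
    define a where "a j = (if j < n then av $ j else 0)" for j
    have av_c: "av \<in> carrier_vec n" using B(1) by (simp add: av_def)
    have dav: "dim_vec av = n" using av_c by simp
    have va: "vec n a = av" by (rule eq_vecI) (simp_all add: a_def dav)
    have a0: "\<forall>j\<ge>n. a j = 0" by (simp add: a_def)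
    have "Mw w *\<^sub>v vec n a = Mw w *\<^sub>v (B *\<^sub>v vec n (co s))" by (simp add: va av_def)
    also have "\<dots> = (Mw w * B) *\<^sub>v vec n (co s)"
      using assoc_mult_mat_vec[OF Mw_carrier B(1), of "vec n (co s)"] by simp
    also have "\<dots> = vec n (co s)" using B(3) by simp
    finally have sa: "s = (\<Sum>j<n. \<phi> (a j) * w j)" using sol_iff[OF a0] by simp
    show "\<exists>!a. (\<forall>i\<ge>n. a i = 0) \<and> s = (\<Sum>i<n. \<phi> (a i) * w i)"
    proof (rule ex1I[of _ a])
      show "(\<forall>i\<ge>n. a i = 0) \<and> s = (\<Sum>i<n. \<phi> (a i) * w i)" using a0 sa by simp
    next
      fix a' assume a': "(\<forall>i\<ge>n. a' i = 0) \<and> s = (\<Sum>i<n. \<phi> (a' i) * w i)"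
      then have m: "Mw w *\<^sub>v vec n a' = vec n (co s)" using sol_iff[of a' s w] by simp
      have "vec n a' = (B * Mw w) *\<^sub>v vec n a'" using B(2) by simp
      also have "\<dots> = B *\<^sub>v (Mw w *\<^sub>v vec n a')"
        using assoc_mult_mat_vec[OF B(1) Mw_carrier, of "vec n a'"] by simp
      also have "\<dots> = av" using m by (simp add: av_def)
      finally have "vec n a' = vec n a" using va by simp
      then show "a' = a"
      proof -
        assume eqv: "vec n a' = vec n a"
        show "a' = a"
        proof
          fix j show "a' j = a j"
          proof (cases "j < n")
            case True
            then show ?thesis using eqv by (metis index_vec)
          next
            case False then show ?thesis using a' a0 by simp
          qed
        qed
      qed
    qed
  qed
qed


lemma sum_left: "(\<Sum>j<n. \<phi> (b j) * (x * e j)) = x * (\<Sum>j<n. \<phi> (b j) * e j)"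
  by (simp add: sum_distrib_left phi_left2)

lemma unit_basis: "(x::'s) \<in> units_of_ring \<longleftrightarrow> is_k_basis \<phi> n (\<lambda>j. x * e j)"
proof
  assume "x \<in> units_of_ring"
  then obtain t where t: "x * t = 1" "t * x = 1" unfolding units_of_ring_def by blast
  show "is_k_basis \<phi> n (\<lambda>j. x * e j)"
    unfolding is_k_basis_def
  proof
    fix s
    show "\<exists>!a. (\<forall>i\<ge>n. a i = 0) \<and> s = (\<Sum>i<n. \<phi> (a i) * (x * e i))"
    proof (rule ex1I[of _ "co (t * s)"])
      have "(\<Sum>i<n. \<phi> (co (t * s) i) * (x * e i)) = x * (t * s)"
        using sum_left coords_prop by metis
      then show "(\<forall>i\<ge>n. co (t * s) i = 0) \<and> s = (\<Sum>i<n. \<phi> (co (t * s) i) * (x * e i))"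
        using coords_zero_beyond t(1) by (simp add: mult.assoc[symmetric])
    next
      fix b assume b: "(\<forall>i\<ge>n. b i = 0) \<and> s = (\<Sum>i<n. \<phi> (b i) * (x * e i))"
      then have "t * s = t * (x * (\<Sum>j<n. \<phi> (b j) * e j))" using sum_left by metis
      also have "\<dots> = (\<Sum>j<n. \<phi> (b j) * e j)" using t(2) by (simp add: mult.assoc[symmetric])
      finally show "b = co (t * s)" using b coords_unique[of b "t * s"] by simp
    qed
  qed
next
  assume "is_k_basis \<phi> n (\<lambda>j. x * e j)"
  then obtain a where "(1::'s) = (\<Sum>i<n. \<phi> (a i) * (x * e i))"
    unfolding is_k_basis_def by blast
  then have "x * (\<Sum>j<n. \<phi> (a j) * e j) = 1" using sum_left by metis
  then show "x \<in> units_of_ring" using unit_iff by blast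
qed

definition D :: "'s \<Rightarrow> 'k" where "D x = det (Mw (\<lambda>j. x ^ j))"
definition N :: "'s \<Rightarrow> 'k" where "N x = det (Mw (\<lambda>j. x * e j))"

lemma unit_N: "(x::'s) \<in> units_of_ring \<longleftrightarrow> N x \<noteq> 0"
  unfolding N_def using unit_basis basis_det by blast

lemma prim_iff: "primitive_element \<phi> n x \<longleftrightarrow> N x \<noteq> 0 \<and> D x \<noteq> 0"
  unfolding primitive_element_def D_def using unit_N basis_det by blast


end
context ext_setup begin

definition PS :: "((nat \<Rightarrow> 'k) \<Rightarrow> 's) \<Rightarrow> bool" where
  "PS g \<longleftrightarrow> (\<forall>i. (\<lambda>\<beta>. co (g \<beta>) i) \<in> poly_funs n)"

lemma PS_const: "PS (\<lambda>\<beta>. x)"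
  unfolding PS_def by (auto intro: poly_funs.const)

lemma PS_emb: "PS emb"
  unfolding PS_def
proof
  fix i
  show "(\<lambda>\<beta>. co (emb \<beta>) i) \<in> poly_funs n"
  proof (cases "i < n")
    case True
    then show ?thesis by (simp add: coords_emb poly_funs.var)
  next
    case False
    then show ?thesis by (simp add: coords_emb poly_funs.const)
  qed
qed

lemma PS_add: "PS g \<Longrightarrow> PS h \<Longrightarrow> PS (\<lambda>\<beta>. g \<beta> + h \<beta>)"
  unfolding PS_def by (simp add: coords_add poly_funs.add)

lemma four: "\<phi> a * x * (\<phi> b * y) = \<phi> (a * b) * (x * y)"
proof -
  have "\<phi> a * x * (\<phi> b * y) = \<phi> a * ((x * \<phi> b) * y)" by (simp only: mult.assoc)
  also have "\<dots> = \<phi> a * ((\<phi> b * x) * y)" by (simp only: phi_central)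
  also have "\<dots> = (\<phi> a * \<phi> b) * (x * y)" by (simp only: mult.assoc)
  finally show ?thesis by (simp only: phi_mult)
qed

lemma mult_expand: "x * y = (\<Sum>j<n. \<Sum>l<n. \<phi> (co x j * co y l) * (e j * e l))"
proof -
  have hx: "(\<Sum>j<n. \<phi> (co x j) * e j) = x" using coords_prop by metis
  have hy: "(\<Sum>j<n. \<phi> (co y j) * e j) = y" using coords_prop by metis
  have "x * y = (\<Sum>j<n. \<phi> (co x j) * e j) * (\<Sum>l<n. \<phi> (co y l) * e l)"
    by (simp only: hx hy)
  also have "\<dots> = (\<Sum>j<n. \<Sum>l<n. (\<phi> (co x j) * e j) * (\<phi> (co y l) * e l))"
    by (rule sum_product)
  also have "\<dots> = (\<Sum>j<n. \<Sum>l<n. \<phi> (co x j * co y l) * (e j * e l))"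
    by (simp only: four)
  finally show ?thesis .
qed

lemma coords_mult: "co (x * y) = (\<lambda>i. \<Sum>j<n. \<Sum>l<n. co x j * co y l * co (e j * e l) i)"
  by (subst mult_expand[of x y]) (simp add: coords_sum coords_smul)

lemma PS_mult:
  assumes g: "PS g" and h: "PS h"
  shows "PS (\<lambda>\<beta>. g \<beta> * h \<beta>)"
  unfolding PS_def
proof
  fix i
  have eq: "(\<lambda>\<beta>. co (g \<beta> * h \<beta>) i) =
      (\<lambda>\<beta>. \<Sum>j<n. \<Sum>l<n. co (g \<beta>) j * co (h \<beta>) l * co (e j * e l) i)"
  proof
    fix \<beta>
    show "co (g \<beta> * h \<beta>) i = (\<Sum>j<n. \<Sum>l<n. co (g \<beta>) j * co (h \<beta>) l * co (e j * e l) i)"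
      using fun_cong[OF coords_mult[of "g \<beta>" "h \<beta>"], of i] by (simp only:)
  qed
  have gi: "(\<lambda>\<beta>. co (g \<beta>) j) \<in> poly_funs n" for j using g unfolding PS_def by blast
  have hi: "(\<lambda>\<beta>. co (h \<beta>) j) \<in> poly_funs n" for j using h unfolding PS_def by blast
  show "(\<lambda>\<beta>. co (g \<beta> * h \<beta>) i) \<in> poly_funs n"
    unfolding eq
    by (intro pf_sum finite_lessThan poly_funs.mult poly_funs.const gi hi)
qed

lemma PS_pow: "PS g \<Longrightarrow> PS (\<lambda>\<beta>. g \<beta> ^ m)"
proof (induction m)
  case 0 then show ?case using PS_const[of 1] by simp
next
  case (Suc m) then show ?case using PS_mult[of g "\<lambda>\<beta>. g \<beta> ^ m"] by simp
qed

lemma pf_det: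
  assumes "\<And>i j. (\<lambda>\<beta>. F \<beta> i j) \<in> poly_funs n"
  shows "(\<lambda>\<beta>. det (mat m m (\<lambda>(i,j). F \<beta> i j))) \<in> poly_funs n"
proof -
  have eq: "det (mat m m (\<lambda>(i,j). F \<beta> i j)) =
     (\<Sum>p\<in>{p. p permutes {0..<m}}. signof p * (\<Prod>i=0..<m. F \<beta> i (p i)))" for \<beta>
  proof -
    have "det (mat m m (\<lambda>(i,j). F \<beta> i j)) =
      (\<Sum>p\<in>{p. p permutes {0..<m}}. signof p * (\<Prod>i=0..<m. mat m m (\<lambda>(i,j). F \<beta> i j) $$ (i, p i)))"
      by (rule det_def'[OF mat_carrier])
    also have "\<dots> = (\<Sum>p\<in>{p. p permutes {0..<m}}. signof p * (\<Prod>i=0..<m. F \<beta> i (p i)))"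
    proof (rule sum.cong[OF refl])
      fix p assume "p \<in> {p. p permutes {0..<m}}"
      then have pp: "p permutes {0..<m}" by simp
      show "signof p * (\<Prod>i=0..<m. mat m m (\<lambda>(i,j). F \<beta> i j) $$ (i, p i)) =
            signof p * (\<Prod>i=0..<m. F \<beta> i (p i))"
        by (rule arg_cong[where f="\<lambda>x. signof p * x"], rule prod.cong[OF refl])
           (use permutes_in_image[OF pp] in auto)
    qed
    finally show ?thesis .
  qed
  show ?thesis
    unfolding eq
    by (intro pf_sum finite_permutations poly_funs.mult poly_funs.const pf_prod finite_atLeastLessThan assms)
qed

lemma pf_Mw: "(\<And>j. PS (\<lambda>\<beta>. w \<beta> j)) \<Longrightarrow> (\<lambda>\<beta>. det (Mw (w \<beta>))) \<in> poly_funs n"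
  unfolding Mw_def PS_def by (rule pf_det) blast

end
context ext_setup begin

lemma curve:
  fixes c ci s :: 's and t :: 'k
  assumes ci: "c * ci = 1" and two: "(2::'k) \<noteq> 0"
  defines "w \<equiv> \<phi> (inverse 2) * (ci * s)"
  shows "c * (1 + \<phi> t * w) ^ 2 = c + \<phi> t * s + \<phi> (t * t) * (c * (w * w))"
proof -
  have cw: "c * w = \<phi> (inverse 2) * s"
  proof -
    have "c * w = \<phi> (inverse 2) * (c * (ci * s))" unfolding w_def by (rule phi_left2)
    also have "c * (ci * s) = s" by (simp only: mult.assoc[symmetric] ci mult_1_left)
    finally show ?thesis .
  qed
  have cw2: "c * w + c * w = s"
  proof -
    have h: "inverse 2 + inverse (2::'k) = 1" using two by (simp add: field_simps)
    have "c * w + c * w = (\<phi> (inverse 2) + \<phi> (inverse 2)) * s" by (simp only: cw distrib_right)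
    also have "\<dots> = \<phi> (inverse 2 + inverse 2) * s" by (simp only: phi_add)
    also have "\<dots> = s" by (simp only: h phi_one mult_1_left)
    finally show ?thesis .
  qed
  have sq: "(1 + \<phi> t * w) ^ 2 = 1 + \<phi> t * w + \<phi> t * w + \<phi> (t * t) * (w * w)"
  proof -
    have "(1 + \<phi> t * w) ^ 2 = (1 + \<phi> t * w) * (1 + \<phi> t * w)" by (rule power2_eq_square)
    also have "\<dots> = 1 + \<phi> t * w + (\<phi> t * w + \<phi> t * w * (\<phi> t * w))"
      by (simp only: distrib_left distrib_right mult_1_left mult_1_right add.assoc)
    also have "\<phi> t * w * (\<phi> t * w) = \<phi> (t * t) * (w * w)" by (rule four)
    finally show ?thesis by (simp only: add.assoc)
  qed
  have "c * (1 + \<phi> t * w) ^ 2 = c + c * (\<phi> t * w) + c * (\<phi> t * w) + c * (\<phi> (t * t) * (w * w))"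
    by (simp only: sq distrib_left mult_1_right)
  also have "\<dots> = c + \<phi> t * (c * w + c * w) + \<phi> (t * t) * (c * (w * w))"
    by (simp only: phi_left2 distrib_left add.assoc)
  finally show ?thesis by (simp only: cw2)
qed

theorem main:
  assumes inf: "infinite (UNIV :: 'k set)" and two: "(2::'k) \<noteq> 0" and c: "c \<in> units_of_ring"
  shows "{b \<in> units_of_ring. primitive_element \<phi> n (c * b ^ 2)} \<noteq> {}
       \<and> zariski_open_in_units \<phi> n e {b \<in> units_of_ring. primitive_element \<phi> n (c * b ^ 2)}"
proof -
  obtain ci where ci: "c * ci = 1" using c unit_iff by blast
  have unit_sq: "c * b ^ 2 \<in> units_of_ring \<longleftrightarrow> b \<in> units_of_ring" for b
  proof
    assume "c * b ^ 2 \<in> units_of_ring"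
    then obtain t where t: "c * b ^ 2 * t = 1" using unit_iff by blast
    have "c * b ^ 2 * t = (b * b) * c * t" using comm[of c "b * b"] by (simp add: power2_eq_square)
    also have "\<dots> = b * (b * (c * t))" by (simp only: mult.assoc)
    finally show "b \<in> units_of_ring" using t unit_iff by metis
  next
    assume "b \<in> units_of_ring"
    then obtain bt where bt: "b * bt = 1" using unit_iff by blast
    have bb: "b * (bt * z) = z" for z by (simp only: mult.assoc[symmetric] bt mult_1_left)
    have "c * b ^ 2 * (bt * (bt * ci)) = c * (b * (b * (bt * (bt * ci))))"
      by (simp only: power2_eq_square mult.assoc)
    also have "\<dots> = 1" by (simp only: bb ci)
    finally show "c * b ^ 2 \<in> units_of_ring" using unit_iff by metis
  qed
  define V where "V = {b \<in> units_of_ring. primitive_element \<phi> n (c * b ^ 2)}"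
  define U where "U = {b. D (c * b ^ 2) \<noteq> 0}"
  have VU: "V = U \<inter> units_of_ring"
  proof -
    have "b \<in> V \<longleftrightarrow> b \<in> U \<inter> units_of_ring" for b
    proof
      assume "b \<in> V"
      then show "b \<in> U \<inter> units_of_ring" unfolding V_def U_def using prim_iff by blast
    next
      assume b: "b \<in> U \<inter> units_of_ring"
      then have "N (c * b ^ 2) \<noteq> 0" using unit_sq unit_N by blast
      then show "b \<in> V" using b unfolding V_def U_def using prim_iff by blast
    qed
    then show ?thesis by blast
  qed
  have psq: "PS (\<lambda>\<beta>. c * emb \<beta> ^ 2)" by (intro PS_mult PS_const PS_pow PS_emb)
  have pD: "(\<lambda>\<beta>. D (c * emb \<beta> ^ 2)) \<in> poly_funs n"
    unfolding D_def by (rule pf_Mw, rule PS_pow, rule psq)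
  have openU: "zariski_open \<phi> n e U"
    unfolding zariski_open_def zariski_closed_def
  proof (intro exI conjI)
    show "{\<lambda>\<beta>. D (c * emb \<beta> ^ 2)} \<subseteq> poly_funs n" using pD by simp
    show "- U = {s. \<forall>p\<in>{\<lambda>\<beta>. D (c * emb \<beta> ^ 2)}. p (co s) = 0}"
      unfolding U_def by auto
  qed
  have nonempty: "V \<noteq> {}"
  proof
    assume V0: "V = {}"
    have F0: "N (c * b ^ 2) * D (c * b ^ 2) = 0" for b
    proof (cases "b \<in> units_of_ring")
      case True
      then have "\<not> primitive_element \<phi> n (c * b ^ 2)" using V0 unfolding V_def by blast
      then show ?thesis using prim_iff by simp
    next
      case False
      then have "N (c * b ^ 2) = 0" using unit_sq unit_N by blast
      then show ?thesis by simp
    qed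
    define p where "p \<beta> = N (emb \<beta>) * D (emb \<beta>)" for \<beta>
    have pp: "p \<in> poly_funs n"
    proof -
      have "(\<lambda>\<beta>. N (emb \<beta>)) \<in> poly_funs n"
        unfolding N_def by (rule pf_Mw, rule PS_mult, rule PS_emb, rule PS_const)
      moreover have "(\<lambda>\<beta>. D (emb \<beta>)) \<in> poly_funs n"
        unfolding D_def by (rule pf_Mw, rule PS_pow, rule PS_emb)
      ultimately show ?thesis unfolding p_def by (rule poly_funs.mult)
    qed
    have pco: "p (co x) = N x * D x" for x by (simp add: p_def)
    have p0: "p (co c) = 0" using F0[of 1] pco by simp
    have dir: "\<exists>u'. (\<forall>t. (\<lambda>i. u i + t * u' i) \<in> range co)
                 \<and> (\<forall>t. p (\<lambda>i. co c i + t * (u i + t * u' i)) = 0)" if u: "u \<in> range co" for u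
    proof -
      obtain s where s: "u = co s" using u by blast
      define w where "w = \<phi> (inverse 2) * (ci * s)"
      show ?thesis
      proof (intro exI[of _ "co (c * (w * w))"] conjI allI)
        fix t
        show "(\<lambda>i. u i + t * co (c * (w * w)) i) \<in> range co"
          using s by (auto simp: coords_add coords_smul intro!: range_eqI[of _ _ "s + \<phi> t * (c * (w * w))"])
      next
        fix t
        have "(\<lambda>i. co c i + t * (u i + t * co (c * (w * w)) i)) =
              co (c + \<phi> t * s + \<phi> (t * t) * (c * (w * w)))"
          by (simp add: s coords_add coords_smul algebra_simps)
        also have "\<dots> = co (c * (1 + \<phi> t * w) ^ 2)"
          using curve[OF ci two, of t s] unfolding w_def by simp
        finally show "p (\<lambda>i. co c i + t * (u i + t * co (c * (w * w)) i)) = 0"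
          using pco F0 by simp
      qed
    qed
    obtain c0 where c0: "primitive_element \<phi> n c0" using se unfolding simple_extension_def by blast
    have "p (\<lambda>i. co c i + co (c0 - c) i) = 0"
      by (rule hasse[OF inf pp p0, of "range co"]) (use dir in auto)
    moreover have "(\<lambda>i. co c i + co (c0 - c) i) = co c0" by (simp add: coords_diff)
    ultimately have "N c0 * D c0 = 0" using pco by simp
    then show False using c0 prim_iff by simp
  qed
  show ?thesis
    unfolding V_def[symmetric]
    using nonempty openU VU unfolding zariski_open_in_units_def by blast
qed

end

theorem lemma3p3:
  fixes \<phi> :: "'k::field \<Rightarrow> 's::ring_1" and n :: nat and e :: "nat \<Rightarrow> 's" and c :: 's
  assumes "infinite (UNIV :: 'k set)"
    and "(2::'k) \<noteq> 0"
    and "simple_extension \<phi> n"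
    and "is_k_basis \<phi> n e"
    and "c \<in> units_of_ring"
  shows "{b \<in> units_of_ring. primitive_element \<phi> n (c * b ^ 2)} \<noteq> {}
       \<and> zariski_open_in_units \<phi> n e {b \<in> units_of_ring. primitive_element \<phi> n (c * b ^ 2)}"
proof -
  have alg: "k_algebra \<phi>" using assms(3) unfolding simple_extension_def by blast
  interpret ext_setup \<phi> n e
    by (rule ext_setup.intro[OF alg assms(4) assms(3)])
  show ?thesis by (rule main[OF assms(1) assms(2) assms(5)])
qed

end
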